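(* Let $X$ be an $n$-dimensional normed space over $\mathbb{K}\in\{\mathbb{R},\mathbb{C}\}$ and let $Y \subseteq X$ be a subspace of dimension $n-1$ satisfying $\lambda(Y, X)>1$. Let $T=\sum_{i=1}^{l}\alpha_i x_i \otimes f_i$ be a Chalmers–Metcalf operator for $Y$. If there is no non-zero $y \in Y$ with $f_i(y)=0$ for all $1 \leq i \leq l$, then the minimal projection $P: X \to Y$ is unique. In particular, the minimal projection is unique if the restriction $T|_Y:Y \to Y$ is invertible.
   Context: A projection onto $Y$ is a linear $P:X\to Y$ with $P|_Y=\mathrm{id}_Y$; $\lambda(Y,X)$ is the infimum of their operator norms and a minimal projection is one of norm $\lambda(Y,X)$. For $x\in X$, $f\in X^*$, $x\otimes f$ is the operator $z\mapsto f(z)x$. A Chalmers–Metcalf operator for $Y$ is an operator $T=\sum_{i=1}^{l}\alpha_i x_i\otimes f_i:X\to X$ with $(x_i,f_i)\in\mathrm{ext}\,B_X\times\mathrm{ext}\,B_{X^*}$, $\alpha_i>0$, $\sum_i\alpha_i=1$, $T(Y)\subseteq Y$, and $f_i(P_0(x_i))=\|P_0\|=\lambda(Y,X)$ for all $i$ and some fixed minimal projection $P_0:X\to Y$. *)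

theory Defs
  imports "HOL-Analysis.Analysis"
begin

text \<open>The scalar field K is a type 'k of class real_normed_field that is (as an
R-algebra) either R or C. A normed space over K is a real normed vector space 'v
with a K-scalar multiplication sc that extends the real one and is norm-homogeneous.\<close>

definition real_or_complex_field :: "'k::real_normed_field itself \<Rightarrow> bool" where
  "real_or_complex_field TYPE('k) \<longleftrightarrow>
     (\<forall>c::'k. \<exists>r. c = of_real r) \<or>
     (\<exists>j::'k. j * j = - 1 \<and> (\<forall>c::'k. \<exists>a b. c = of_real a + of_real b * j))"

definition K_normed_space :: "('k::real_normed_field \<Rightarrow> 'v::real_normed_vector \<Rightarrow> 'v) \<Rightarrow> bool" where
  "K_normed_space sc \<longleftrightarrow> vector_space sc \<and>
     (\<forall>r x. sc (of_real r) x = r *\<^sub>R x) \<and>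
     (\<forall>c x. norm (sc c x) = norm c * norm x)"

definition is_projection :: "('k::real_normed_field \<Rightarrow> 'v::real_normed_vector \<Rightarrow> 'v) \<Rightarrow> 'v set \<Rightarrow> ('v \<Rightarrow> 'v) \<Rightarrow> bool" where
  "is_projection sc Y P \<longleftrightarrow> Vector_Spaces.linear sc sc P \<and> range P \<subseteq> Y \<and> (\<forall>y\<in>Y. P y = y)"

definition proj_const :: "('k::real_normed_field \<Rightarrow> 'v::real_normed_vector \<Rightarrow> 'v) \<Rightarrow> 'v set \<Rightarrow> real" where
  "proj_const sc Y = Inf (onorm ` {P. is_projection sc Y P})"

definition minimal_projection :: "('k::real_normed_field \<Rightarrow> 'v::real_normed_vector \<Rightarrow> 'v) \<Rightarrow> 'v set \<Rightarrow> ('v \<Rightarrow> 'v) \<Rightarrow> bool" where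
  "minimal_projection sc Y P \<longleftrightarrow> is_projection sc Y P \<and> onorm P = proj_const sc Y"

text \<open>Extreme points of the unit ball of X and of the unit ball of the dual X*
(the dual ball = K-linear functionals of operator norm at most 1; extreme points are
taken with respect to real convex combinations, as usual).\<close>

definition ext_ball :: "'v::real_normed_vector \<Rightarrow> bool" where
  "ext_ball x \<longleftrightarrow> x extreme_point_of cball 0 1"

definition dual_ball :: "('k::real_normed_field \<Rightarrow> 'v::real_normed_vector \<Rightarrow> 'v) \<Rightarrow> ('v \<Rightarrow> 'k) set" where
  "dual_ball sc = {f. Vector_Spaces.linear sc (*) f \<and> onorm f \<le> 1}"

definition ext_dual_ball :: "('k::real_normed_field \<Rightarrow> 'v::real_normed_vector \<Rightarrow> 'v) \<Rightarrow> ('v \<Rightarrow> 'k) \<Rightarrow> bool" where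
  "ext_dual_ball sc f \<longleftrightarrow> f \<in> dual_ball sc \<and>
     (\<forall>g\<in>dual_ball sc. \<forall>h\<in>dual_ball sc. \<forall>t::real. 0 < t \<and> t < 1 \<and>
        f = (\<lambda>z. of_real t * g z + of_real (1 - t) * h z) \<longrightarrow> g = h)"

text \<open>The operator sum_{i<l} alpha_i x_i \<otimes> f_i, where (x \<otimes> f)(z) = f(z) x.\<close>

definition CM_op :: "('k::real_normed_field \<Rightarrow> 'v::real_normed_vector \<Rightarrow> 'v) \<Rightarrow> nat \<Rightarrow> (nat \<Rightarrow> real) \<Rightarrow> (nat \<Rightarrow> 'v) \<Rightarrow> (nat \<Rightarrow> 'v \<Rightarrow> 'k) \<Rightarrow> 'v \<Rightarrow> 'v" where
  "CM_op sc l \<alpha> x f = (\<lambda>z. \<Sum>i<l. sc (of_real (\<alpha> i) * f i z) (x i))"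

definition Chalmers_Metcalf :: "('k::real_normed_field \<Rightarrow> 'v::real_normed_vector \<Rightarrow> 'v) \<Rightarrow> 'v set \<Rightarrow> nat \<Rightarrow> (nat \<Rightarrow> real) \<Rightarrow> (nat \<Rightarrow> 'v) \<Rightarrow> (nat \<Rightarrow> 'v \<Rightarrow> 'k) \<Rightarrow> bool" where
  "Chalmers_Metcalf sc Y l \<alpha> x f \<longleftrightarrow>
     (\<forall>i<l. ext_ball (x i) \<and> ext_dual_ball sc (f i) \<and> \<alpha> i > 0) \<and>
     (\<Sum>i<l. \<alpha> i) = 1 \<and>
     CM_op sc l \<alpha> x f ` Y \<subseteq> Y \<and>
     (\<exists>P0. minimal_projection sc Y P0 \<and>
        (\<forall>i<l. f i (P0 (x i)) = of_real (onorm P0) \<and> onorm P0 = proj_const sc Y))"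

end

theory Submission
  imports Defs
begin


lemma findim_bounded:
  fixes g :: "'a::real_normed_vector \<Rightarrow> 'b::real_normed_vector" and B :: "'a set"
  assumes finB: "finite B" and spB: "span B = UNIV" and lin: "linear g"
  shows "bounded_linear g"
proof -
  obtain C :: "'a set" where indC: "independent C" and spC: "UNIV \<subseteq> span C"
    using real_vector.basis_exists[of "UNIV::'a set"] by blast
  have finC: "finite C"
    using real_vector.independent_span_bound[OF finB indC] spB by auto
  have gadd: "g (x + y) = g x + g y" for x y using lin by (simp add: linear_add)
  have gscale: "g (r *\<^sub>R x) = r *\<^sub>R g x" for r x using lin by (simp add: linear_scale)
  show ?thesis
  proof (cases "C = {}")
    case True
    then have "x = 0" for x :: 'a using spC by auto
    then have "g x = 0" for x using lin by (metis linear_0)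
    then show ?thesis by (intro bounded_linear_intro[where K=0]) (auto simp: gadd gscale)
  next
    case False
    then obtain b0 where b0: "b0 \<in> C" by blast
    define Q where "Q = Pi\<^sub>E UNIV (\<lambda>b. if b \<in> C then cball (0::real) 1 else {0})"
    define S where "S = Q \<inter> {c. (\<Sum>b\<in>C. \<bar>c b\<bar>) = 1}"
    have "compactin (product_topology (\<lambda>b. euclidean) UNIV) Q"
      unfolding Q_def by (subst compactin_PiE) auto
    then have cQ: "compact Q" by (simp add: euclidean_product_topology)
    have cont1: "continuous_on UNIV (\<lambda>c::'a\<Rightarrow>real. \<Sum>b\<in>C. \<bar>c b\<bar>)"
      by (intro continuous_intros continuous_on_product_coordinates)
    have "closed {c::'a\<Rightarrow>real. (\<Sum>b\<in>C. \<bar>c b\<bar>) = 1}"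
      by (intro closed_Collect_eq cont1 continuous_on_const)
    then have cS: "compact S" unfolding S_def by (rule compact_Int_closed[OF cQ])
    have neS: "S \<noteq> {}"
    proof -
      have "(\<lambda>b. if b = b0 then 1 else 0) \<in> S"
        unfolding S_def Q_def using b0 finC by (auto simp: PiE_iff if_distrib sum.delta cong: if_cong)
      then show ?thesis by blast
    qed
    have "continuous_on S (\<lambda>c. norm (\<Sum>b\<in>C. c b *\<^sub>R b))"
      by (intro continuous_intros continuous_on_subset[OF continuous_on_product_coordinates]) auto
    then obtain c0 where c0: "c0 \<in> S" and c0min: "\<And>c. c \<in> S \<Longrightarrow> norm (\<Sum>b\<in>C. c0 b *\<^sub>R b) \<le> norm (\<Sum>b\<in>C. c b *\<^sub>R b)"
      using continuous_attains_inf[OF cS neS] by blast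
    define mu where "mu = norm (\<Sum>b\<in>C. c0 b *\<^sub>R b)"
    have mupos: "mu > 0"
    proof (rule ccontr)
      assume "\<not> mu > 0"
      then have "(\<Sum>b\<in>C. c0 b *\<^sub>R b) = 0" unfolding mu_def by simp
      then have "\<forall>b\<in>C. c0 b = 0"
        using indC finC real_vector.dependent_finite by blast
      then show False using c0 unfolding S_def by simp
    qed
    define M where "M = (\<Sum>b\<in>C. norm (g b))"
    show ?thesis
    proof (rule bounded_linear_intro[where K="M / mu"])
      fix x :: 'a
      have "x \<in> span C" using spC by auto
      then obtain u where xu: "x = (\<Sum>b\<in>C. u b *\<^sub>R b)"
        using real_vector.span_finite[OF finC] by auto
      define s where "s = (\<Sum>b\<in>C. \<bar>u b\<bar>)"
      have gx: "g x = (\<Sum>b\<in>C. u b *\<^sub>R g b)"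
        unfolding xu using lin by (simp add: linear_sum linear_scale)
      have "norm (g x) \<le> (\<Sum>b\<in>C. norm (u b *\<^sub>R g b))"
        unfolding gx by (rule norm_sum)
      also have "\<dots> \<le> (\<Sum>b\<in>C. s * norm (g b))"
      proof (rule sum_mono)
        fix b assume "b \<in> C"
        then have "\<bar>u b\<bar> \<le> s" unfolding s_def using finC
          by (intro member_le_sum) auto
        then show "norm (u b *\<^sub>R g b) \<le> s * norm (g b)"
          by (simp add: mult_right_mono)
      qed
      also have "\<dots> = s * M" unfolding M_def by (simp add: sum_distrib_left)
      finally have ngx: "norm (g x) \<le> s * M" .
      have M0: "M \<ge> 0" unfolding M_def by (simp add: sum_nonneg)
      have s0: "s \<ge> 0" unfolding s_def by (simp add: sum_nonneg)
      have "s \<le> norm x / mu"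
      proof (cases "s = 0")
        case True then show ?thesis using mupos by simp
      next
        case False
        then have spos: "s > 0" using s0 by simp
        define c where "c = (\<lambda>b. if b \<in> C then u b / s else 0)"
        have "c \<in> S"
        proof -
          have "\<bar>u b\<bar> \<le> s" if "b \<in> C" for b unfolding s_def using finC that
            by (intro member_le_sum) auto
          then have "c \<in> Q" unfolding Q_def c_def using spos by (auto simp: PiE_iff)
          moreover have "(\<Sum>b\<in>C. \<bar>c b\<bar>) = 1"
            unfolding c_def using spos
            by (simp add: sum_divide_distrib[symmetric] s_def)
          ultimately show ?thesis unfolding S_def by simp
        qed
        then have "mu \<le> norm (\<Sum>b\<in>C. c b *\<^sub>R b)" using c0min unfolding mu_def by blast
        also have "(\<Sum>b\<in>C. c b *\<^sub>R b) = (1/s) *\<^sub>R x"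
          unfolding xu c_def by (simp add: scaleR_sum_right)
        also have "norm ((1/s) *\<^sub>R x) = norm x / s" using spos by simp
        finally show ?thesis using spos mupos by (simp add: field_simps)
      qed
      then have "s * M \<le> norm x / mu * M" using M0 by (rule mult_right_mono)
      then show "norm (g x) \<le> norm x * (M / mu)" using ngx by simp
    qed (auto simp: gadd gscale)
  qed
qed



lemma normj_unit_le:
  fixes j :: "'k::real_normed_field"
  assumes j: "j * j = -1" and ab: "a\<^sup>2 + b\<^sup>2 = 1"
  shows "norm (of_real a + of_real b * j) \<le> 1"
proof -
  define z where "z = of_real a + of_real b * j"
  have nj: "norm j = 1"
  proof -
    have "norm j * norm j = 1" using j by (metis norm_minus_cancel norm_mult norm_one)
    then show ?thesis by (metis abs_norm_cancel abs_square_eq_1 power2_eq_square)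
  qed
  have pw: "\<exists>c d. z ^ k = of_real c + of_real d * j \<and> c\<^sup>2 + d\<^sup>2 = 1" for k
  proof (induction k)
    case 0
    show ?case by (rule exI[of _ 1], rule exI[of _ 0]) simp
  next
    case (Suc k)
    then obtain c d where cd: "z ^ k = of_real c + of_real d * j" "c\<^sup>2 + d\<^sup>2 = 1" by blast
    have "z ^ Suc k = (of_real c + of_real d * j) * (of_real a + of_real b * j)"
      using cd z_def by (simp add: mult.commute)
    also have "\<dots> = of_real (c*a - d*b) + of_real (c*b + d*a) * j"
    proof -
      have "(of_real c + of_real d * j) * (of_real a + of_real b * j) =
            of_real c * of_real a + (of_real d * of_real b) * (j * j) + (of_real c * of_real b + of_real d * of_real a) * j"
        by (simp add: algebra_simps)
      then show ?thesis using j by (simp add: algebra_simps)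
    qed
    finally have "z ^ Suc k = of_real (c*a - d*b) + of_real (c*b + d*a) * j" .
    moreover have "(c*a - d*b)\<^sup>2 + (c*b + d*a)\<^sup>2 = 1"
    proof -
      have "(c*a - d*b)\<^sup>2 + (c*b + d*a)\<^sup>2 = (c\<^sup>2 + d\<^sup>2) * (a\<^sup>2 + b\<^sup>2)"
        by (simp add: power2_eq_square algebra_simps)
      then show ?thesis using cd ab by simp
    qed
    ultimately show ?case by blast
  qed
  have bnd: "norm z ^ k \<le> 2" for k
  proof -
    obtain c d where cd: "z ^ k = of_real c + of_real d * j" "c\<^sup>2 + d\<^sup>2 = 1" using pw by blast
    have c1: "\<bar>c\<bar> \<le> 1" using cd(2)
      by (metis abs_le_square_iff abs_one le_add_same_cancel1 one_power2 zero_le_power2)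
    have d1: "\<bar>d\<bar> \<le> 1" using cd(2)
      by (metis abs_le_square_iff abs_one le_add_same_cancel2 one_power2 zero_le_power2)
    have "norm z ^ k = norm (of_real c + of_real d * j :: 'k)" by (metis cd(1) norm_power)
    also have "\<dots> \<le> norm (of_real c :: 'k) + norm (of_real d * j)" by (rule norm_triangle_ineq)
    also have "\<dots> = \<bar>c\<bar> + \<bar>d\<bar>" using nj by (simp add: norm_mult)
    finally show ?thesis using c1 d1 by simp
  qed
  show ?thesis
  proof (rule ccontr)
    assume "\<not> ?thesis"
    then have "1 < norm z" unfolding z_def by simp
    then obtain k where "2 < norm z ^ k" using real_arch_pow by blast
    then show False using bnd[of k] by simp
  qed
qed

lemma normj_formula:
  fixes j :: "'k::real_normed_field"
  assumes j: "j * j = -1"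
  shows "norm (of_real a + of_real b * j) = sqrt (a\<^sup>2 + b\<^sup>2)"
proof -
  have unit: "norm (of_real a + of_real b * j) = 1" if ab: "a\<^sup>2 + b\<^sup>2 = 1" for a b
  proof -
    have le1: "norm (of_real a + of_real b * j) \<le> 1" using normj_unit_le[OF j ab] .
    have le2: "norm (of_real a + of_real (-b) * j) \<le> 1" using normj_unit_le[OF j, of a "-b"] ab by simp
    have "(of_real a + of_real b * j) * (of_real a + of_real (-b) * j) = (of_real (a\<^sup>2 + b\<^sup>2) :: 'k)"
    proof -
      have "(of_real a + of_real b * j) * (of_real a + of_real (-b) * j) = 
            of_real a * of_real a - of_real b * of_real b * (j * j)"
        by (simp add: algebra_simps)
      then show ?thesis using j by (simp add: power2_eq_square)
    qed
    then have "norm (of_real a + of_real b * j) * norm (of_real a + of_real (-b) * j :: 'k) = 1"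
      using ab by (metis norm_mult norm_one of_real_1)
    then show ?thesis using le1 le2
    proof -
      assume p: "norm (of_real a + of_real b * j) * norm (of_real a + of_real (-b) * j :: 'k) = 1"
      show ?thesis
      proof (rule ccontr)
        assume "\<not> ?thesis"
        then have lt: "norm (of_real a + of_real b * j) < 1" using le1 by simp
        have "norm (of_real a + of_real b * j) * norm (of_real a + of_real (-b) * j :: 'k)
              \<le> norm (of_real a + of_real b * j) * 1"
          by (rule mult_left_mono[OF le2 norm_ge_zero])
        then show False using p lt by simp
      qed
    qed
  qed
  define r where "r = sqrt (a\<^sup>2 + b\<^sup>2)"
  show ?thesis
  proof (cases "r = 0")
    case True
    then have "a = 0" "b = 0" unfolding r_def by (simp_all add: sum_power2_eq_zero_iff)
    then show ?thesis by simp
  next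
    case False
    have "r \<ge> 0" unfolding r_def by simp
    then have rpos: "r > 0" using False by linarith
    have r2: "r\<^sup>2 = a\<^sup>2 + b\<^sup>2" unfolding r_def by simp
    have "(a/r)\<^sup>2 + (b/r)\<^sup>2 = (a\<^sup>2 + b\<^sup>2) / r\<^sup>2"
      by (simp add: power_divide add_divide_distrib)
    moreover have nz: "a\<^sup>2 + b\<^sup>2 \<noteq> 0" using r2 rpos by (metis less_irrefl power_not_zero)
    ultimately have "(a/r)\<^sup>2 + (b/r)\<^sup>2 = 1" using r2 by (simp only:) (rule divide_self[OF nz])
    then have u: "norm (of_real (a/r) + of_real (b/r) * j :: 'k) = 1" by (rule unit)
    have "of_real a + of_real b * j = of_real r * (of_real (a/r) + of_real (b/r) * j :: 'k)"
    proof -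
      have "of_real r * (of_real (a/r) + of_real (b/r) * j :: 'k) = of_real (r*(a/r)) + of_real (r*(b/r)) * j"
        by (simp only: distrib_left of_real_mult mult.assoc)
      then show ?thesis using rpos by simp
    qed
    then have "norm (of_real a + of_real b * j) = r * 1"
      using u rpos by (simp add: norm_mult)
    then show ?thesis unfolding r_def by simp
  qed
qed



lemma j_uniq:
  fixes j :: "'k::real_normed_field"
  assumes j: "j * j = -1" and eq: "of_real a + of_real b * j = (of_real a' + of_real b' * j :: 'k)"
  shows "a = a' \<and> b = b'"
proof -
  have bb: "b = b'"
  proof (rule ccontr)
    assume ne: "b \<noteq> b'"
    have "of_real (b - b') * j = (of_real (a' - a) :: 'k)" using eq by (simp add: algebra_simps)
    then have "j = of_real ((a' - a) / (b - b'))" using ne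
      by (simp add: field_simps)
    then have "of_real (((a' - a) / (b - b')) * ((a' - a) / (b - b'))) = (of_real (-1) :: 'k)"
      using j by (metis of_real_minus of_real_1 of_real_mult)
    then have "((a' - a) / (b - b')) * ((a' - a) / (b - b')) = -1" by (rule of_real_eq_iff[THEN iffD1])
    moreover have "((a' - a) / (b - b')) * ((a' - a) / (b - b')) \<ge> 0" by simp
    ultimately show False by simp
  qed
  then have "a = a'" using eq by simp
  with bb show ?thesis by simp
qed

lemma K_re:
  assumes "real_or_complex_field TYPE('k)"
  obtains R :: "'k::real_normed_field \<Rightarrow> real" where "linear R" "\<And>r. R (of_real r) = r" "\<And>a. R a \<le> norm a"
    "\<And>a. R a = norm a \<Longrightarrow> a = of_real (norm a)"
  using assms unfolding real_or_complex_field_def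
proof (elim disjE exE conjE)
  assume all: "\<forall>c::'k. \<exists>r. c = of_real r"
  define R where "R c = (THE r. c = of_real r)" for c :: 'k
  have Rof: "R (of_real r) = r" for r unfolding R_def by (rule the_equality) auto
  have lin: "linear R"
  proof (rule linearI)
    fix b1 b2 :: 'k
    obtain r1 r2 where "b1 = of_real r1" "b2 = of_real r2" using all by blast
    then show "R (b1 + b2) = R b1 + R b2" by (metis Rof of_real_add)
  next
    fix r and b :: 'k
    obtain r1 where "b = of_real r1" using all by blast
    then show "R (r *\<^sub>R b) = r *\<^sub>R R b" by (metis Rof of_real_mult scaleR_conv_of_real real_scaleR_def)
  qed
  show ?thesis
  proof (rule that[OF lin Rof])
    fix a :: 'k
    obtain r where a: "a = of_real r" using all by blast
    show "R a \<le> norm a" using a Rof by simp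
    assume "R a = norm a"
    then have "r = \<bar>r\<bar>" using a Rof by simp
    then show "a = of_real (norm a)" using a by simp
  qed
next
  fix j :: 'k
  assume j: "j * j = -1" and all: "\<forall>c::'k. \<exists>a b. c = of_real a + of_real b * j"
  define R where "R c = (THE a. \<exists>b. c = of_real a + of_real b * j)" for c :: 'k
  have Rof2: "R (of_real a + of_real b * j) = a" for a b
    unfolding R_def by (rule the_equality) (auto dest: j_uniq[OF j])
  have Rof: "R (of_real r) = r" for r using Rof2[of r 0] by simp
  have lin: "linear R"
  proof (rule linearI)
    fix b1 b2 :: 'k
    obtain a1 c1 a2 c2 where bs: "b1 = of_real a1 + of_real c1 * j" "b2 = of_real a2 + of_real c2 * j" using all by blast
    have e: "(of_real a1 + of_real c1 * j) + (of_real a2 + of_real c2 * j) = (of_real (a1 + a2) + of_real (c1 + c2) * j :: 'k)"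
      by (simp add: algebra_simps)
    have "R (b1 + b2) = a1 + a2" unfolding bs e by (rule Rof2)
    then show "R (b1 + b2) = R b1 + R b2" unfolding bs Rof2 .
  next
    fix r and b :: 'k
    obtain a1 c1 where bs: "b = of_real a1 + of_real c1 * j" using all by blast
    have e: "r *\<^sub>R (of_real a1 + of_real c1 * j) = (of_real (r * a1) + of_real (r * c1) * j :: 'k)"
      by (simp add: scaleR_conv_of_real algebra_simps)
    have "R (r *\<^sub>R b) = r * a1" unfolding bs e by (rule Rof2)
    then show "R (r *\<^sub>R b) = r *\<^sub>R R b" unfolding bs Rof2 by simp
  qed
  show ?thesis
  proof (rule that[OF lin Rof])
    fix c :: 'k
    obtain a b where c: "c = of_real a + of_real b * j" using all by blast
    have nc: "norm c = sqrt (a\<^sup>2 + b\<^sup>2)" using c normj_formula[OF j] by simp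
    show "R c \<le> norm c" using nc c Rof2 by simp
    assume "R c = norm c"
    then have e: "a = sqrt (a\<^sup>2 + b\<^sup>2)" using nc c Rof2 by simp
    then have "a\<^sup>2 = a\<^sup>2 + b\<^sup>2" by (metis real_sqrt_pow2 zero_le_power2 add_nonneg_nonneg)
    then have "b = 0" by simp
    then show "c = of_real (norm c)" using c e nc by simp
  qed
qed



lemma K_extreme:
  fixes a :: "nat \<Rightarrow> 'k::real_normed_field"
  assumes K: "real_or_complex_field TYPE('k)" and pos: "\<forall>i<l. \<alpha> i > 0"
    and s1: "(\<Sum>i<l. \<alpha> i) = 1" and bnd: "\<forall>i<l. norm (a i) \<le> lam"
    and sm: "(\<Sum>i<l. of_real (\<alpha> i) * a i) = (of_real lam :: 'k)"
  shows "\<forall>i<l. a i = of_real lam"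
proof -
  obtain R :: "'k \<Rightarrow> real" where lin: "linear R" and Rof: "\<And>r. R (of_real r) = r"
    and Rle: "\<And>a. R a \<le> norm a" and Req: "\<And>a. R a = norm a \<Longrightarrow> a = of_real (norm a)"
    using K_re[OF K] by blast
  have "R (\<Sum>i<l. of_real (\<alpha> i) * a i) = (\<Sum>i<l. \<alpha> i * R (a i))"
    using lin by (simp add: linear_sum linear_scale flip: scaleR_conv_of_real)
  then have sR: "(\<Sum>i<l. \<alpha> i * R (a i)) = lam" using sm Rof by simp
  have "(\<Sum>i<l. \<alpha> i * (lam - R (a i))) = lam * (\<Sum>i<l. \<alpha> i) - (\<Sum>i<l. \<alpha> i * R (a i))"
    by (simp add: algebra_simps sum_subtractf sum_distrib_left)
  also have "\<dots> = 0" using s1 sR by simp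
  finally have z: "(\<Sum>i<l. \<alpha> i * (lam - R (a i))) = 0" .
  have nn: "\<forall>i\<in>{..<l}. 0 \<le> \<alpha> i * (lam - R (a i))"
  proof
    fix i assume "i \<in> {..<l}"
    then have "\<alpha> i > 0" "R (a i) \<le> lam" using pos bnd Rle[of "a i"] by auto
    then show "0 \<le> \<alpha> i * (lam - R (a i))" by simp
  qed
  show ?thesis
  proof (intro allI impI)
    fix i assume il: "i < l"
    have "\<alpha> i * (lam - R (a i)) = 0" using sum_nonneg_eq_0_iff[OF finite_lessThan, of l "\<lambda>i. \<alpha> i * (lam - R (a i))"] nn z il by simp
    then have Ri: "R (a i) = lam" using pos il by (metis less_irrefl mult_eq_0_iff right_minus_eq)
    then have "R (a i) = norm (a i)" using Rle[of "a i"] bnd il by fastforce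
    then have "a i = of_real (norm (a i))" by (rule Req)
    then show "a i = of_real lam" using \<open>R (a i) = norm (a i)\<close> Ri by simp
  qed
qed



lemma Klin_real:
  fixes sc :: "'k::real_normed_field \<Rightarrow> 'a::real_normed_vector \<Rightarrow> 'a"
    and sc' :: "'k \<Rightarrow> 'b::real_normed_vector \<Rightarrow> 'b"
  assumes s1: "\<And>r x. sc (of_real r) x = r *\<^sub>R x" and s2: "\<And>r y. sc' (of_real r) y = r *\<^sub>R y"
    and lin: "Vector_Spaces.linear sc sc' g"
  shows "linear g"
proof (rule linearI)
  have l: "\<forall>x y. g (x + y) = g x + g y" "\<forall>c x. g (sc c x) = sc' c (g x)"
    using lin unfolding Vector_Spaces.linear_iff by auto
  show "g (x + y) = g x + g y" for x y using l by blast
  show "g (r *\<^sub>R x) = r *\<^sub>R g x" for r x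
  proof -
    have "g (r *\<^sub>R x) = g (sc (of_real r) x)" by (simp only: s1)
    also have "\<dots> = sc' (of_real r) (g x)" using l(2) by blast
    also have "\<dots> = r *\<^sub>R g x" by (simp only: s2)
    finally show ?thesis .
  qed
qed

lemma real_span_fin:
  fixes sc :: "'k::real_normed_field \<Rightarrow> 'v::real_normed_vector \<Rightarrow> 'v"
  assumes K: "real_or_complex_field TYPE('k)" and vs: "vector_space sc"
    and scR: "\<And>r x. sc (of_real r) x = r *\<^sub>R x" and fin: "finite B" and sp: "module.span sc B = UNIV"
  shows "\<exists>B'::'v set. finite B' \<and> span B' = UNIV"
proof -
  interpret V: vector_space sc by (rule vs)
  have rep: "\<exists>u. x = (\<Sum>v\<in>B. sc (u v) v)" for x
  proof -
    have "x \<in> range (\<lambda>u. \<Sum>v\<in>B. sc (u v) v)" using V.span_finite[OF fin] sp by simp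
    then show ?thesis by blast
  qed
  from K[unfolded real_or_complex_field_def] show ?thesis
  proof (elim disjE exE conjE)
    assume all: "\<forall>c::'k. \<exists>r. c = of_real r"
    have "x \<in> span B" for x
    proof -
      obtain u where xu: "x = (\<Sum>v\<in>B. sc (u v) v)" using rep by blast
      have "sc (u v) v \<in> span B" if "v \<in> B" for v
      proof -
        obtain r where "u v = of_real r" using all by blast
        then show ?thesis using that scR by (simp add: span_base span_scale)
      qed
      then show ?thesis unfolding xu by (intro span_sum) auto
    qed
    then have "span B = UNIV" by auto
    then show ?thesis using fin by (intro exI[of _ B]) simp
  next
    fix j :: 'k
    assume all: "\<forall>c::'k. \<exists>a b. c = of_real a + of_real b * j"
    have "x \<in> span (B \<union> sc j ` B)" for x
    proof -
      obtain u where xu: "x = (\<Sum>v\<in>B. sc (u v) v)" using rep by blast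
      have "sc (u v) v \<in> span (B \<union> sc j ` B)" if "v \<in> B" for v
      proof -
        obtain a b where ab: "u v = of_real a + of_real b * j" using all by blast
        have e1: "sc (u v) v = sc (of_real a) v + sc (of_real b * j) v"
          unfolding ab by (rule V.scale_left_distrib)
        have e2: "sc (of_real b * j) v = sc (of_real b) (sc j v)" by (simp only: V.scale_scale)
        have "sc (u v) v = a *\<^sub>R v + b *\<^sub>R (sc j v)" unfolding e1 e2 scR ..
        moreover have "a *\<^sub>R v + b *\<^sub>R (sc j v) \<in> span (B \<union> sc j ` B)"
          using that by (intro span_add span_scale span_base) auto
        ultimately show ?thesis by simp
      qed
      then show ?thesis unfolding xu by (intro span_sum) auto
    qed
    then have "span (B \<union> sc j ` B) = UNIV" by auto
    then show ?thesis using fin by (intro exI[of _ "B \<union> sc j ` B"]) simp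
  qed
qed

theorem mainTheorem17:
  fixes sc :: "'k::real_normed_field \<Rightarrow> 'v::real_normed_vector \<Rightarrow> 'v"
    and Y :: "'v set" and n l :: nat
    and \<alpha> :: "nat \<Rightarrow> real" and x :: "nat \<Rightarrow> 'v" and f :: "nat \<Rightarrow> 'v \<Rightarrow> 'k"
  assumes "real_or_complex_field TYPE('k)"
    and "K_normed_space sc"
    and "\<exists>B. finite B \<and> module.span sc B = UNIV"
    and "vector_space.dim sc (UNIV :: 'v set) = n"
    and "n \<ge> 1"
    and "module.subspace sc Y"
    and "vector_space.dim sc Y = n - 1"
    and "proj_const sc Y > 1"
    and "Chalmers_Metcalf sc Y l \<alpha> x f"
  shows "(\<not> (\<exists>y\<in>Y. y \<noteq> 0 \<and> (\<forall>i<l. f i y = 0)) \<longrightarrow> (\<exists>!P. minimal_projection sc Y P))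
       \<and> (bij_betw (CM_op sc l \<alpha> x f) Y Y \<longrightarrow> (\<exists>!P. minimal_projection sc Y P))"
proof -
  note K = assms(1)
  have vs: "vector_space sc" and scR: "\<And>r x. sc (of_real r) x = r *\<^sub>R x"
    using assms(2) unfolding K_normed_space_def by auto
  interpret V: vector_space sc by (rule vs)
  obtain B where finB: "finite B" and spB: "V.span B = UNIV" using assms(3) by blast
  obtain B' :: "'v set" where finB': "finite B'" and spB': "span B' = UNIV"
    using real_span_fin[OF K vs scR finB spB] by blast
  have bl1: "bounded_linear g" if "Vector_Spaces.linear sc sc g" for g
    by (rule findim_bounded[OF finB' spB' Klin_real[OF scR scR that]])
  have bl2: "bounded_linear g" if "Vector_Spaces.linear sc ((*) :: 'k \<Rightarrow> 'k \<Rightarrow> 'k) g" for g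
    by (rule findim_bounded[OF finB' spB' Klin_real[OF scR _ that]]) (simp add: scaleR_conv_of_real)
  have linD: "g (a + b) = g a + g b" "g (sc c a) = s2 c (g a)"
    if "Vector_Spaces.linear sc s2 g" for g s2 a b c
    using that unfolding Vector_Spaces.linear_iff by auto
  define lam where "lam = proj_const sc Y"
  have lam1: "lam > 1" using assms(8) lam_def by simp
  note CM = assms(9)[unfolded Chalmers_Metcalf_def]
  have apos: "\<forall>i<l. \<alpha> i > 0" and asum: "(\<Sum>i<l. \<alpha> i) = 1"
    and TY: "CM_op sc l \<alpha> x f ` Y \<subseteq> Y" using CM by auto
  have xn: "norm (x i) \<le> 1" if "i < l" for i
    using CM that unfolding ext_ball_def extreme_point_of_def by auto
  have flin: "Vector_Spaces.linear sc (*) (f i)" and fon: "onorm (f i) \<le> 1" if "i < l" for i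
    using CM that unfolding ext_dual_ball_def dual_ball_def by auto
  have fbl: "bounded_linear (f i)" if "i < l" for i using bl2[OF flin[OF that]] .
  obtain P0 where P0min: "minimal_projection sc Y P0"
    and P0x: "\<And>i. i < l \<Longrightarrow> f i (P0 (x i)) = of_real lam"
    using CM lam_def by auto
  have proj: "Vector_Spaces.linear sc sc P" "range P \<subseteq> Y" "\<And>y. y \<in> Y \<Longrightarrow> P y = y" "onorm P = lam"
    if "minimal_projection sc Y P" for P
    using that unfolding minimal_projection_def is_projection_def lam_def by auto
  have Psmall: "norm (P z) \<le> lam * norm z" if "minimal_projection sc Y P" for P z
    using onorm[OF bl1[OF proj(1)[OF that]]] proj(4)[OF that] by simp
  have fsmall: "norm (f i z) \<le> norm z" if "i < l" for i z
  proof -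
    have "norm (f i z) \<le> onorm (f i) * norm z" by (rule onorm[OF fbl[OF that]])
    also have "\<dots> \<le> 1 * norm z" by (rule mult_right_mono[OF fon[OF that] norm_ge_zero])
    finally show ?thesis by simp
  qed
  have subY: "V.subspace Y" by (rule assms(6))
  have lpos: "l > 0" using asum by (cases l) auto
  have xnotY: "x i \<notin> Y" if "i < l" for i
  proof
    assume "x i \<in> Y"
    then have "f i (x i) = of_real lam" using P0x[OF that] proj(3)[OF P0min] by simp
    then have "lam \<le> norm (x i)" using fsmall[OF that, of "x i"] lam1 by simp
    then show False using xn[OF that] lam1 by simp
  qed
  define w where "w = x 0"
  have wY: "w \<notin> Y" unfolding w_def using xnotY lpos by blast
  have spanW: "V.span (insert w Y) = UNIV"
  proof -
    obtain Bas where indB: "V.independent Bas" and spBas: "UNIV \<subseteq> V.span Bas"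
      using V.basis_exists[of "UNIV::'v set"] by blast
    have finBas: "finite Bas" using V.independent_span_bound[OF finB indB] spB by auto
    interpret F: finite_dimensional_vector_space sc Bas
      by unfold_locales (use finBas indB spBas in auto)
    have spY: "V.span Y = Y" by (rule V.span_eq_iff[THEN iffD2, OF subY])
    have "w \<notin> V.span Y" unfolding spY by (rule wY)
    then have "V.dim (insert w Y) = V.dim Y + 1" using F.dim_insert[of w Y] by simp
    then have "V.dim (insert w Y) = F.dimension" using assms(4,5,7) F.dim_UNIV F.dimension_def by simp
    then show ?thesis using F.dim_eq_full by blast
  qed
  have decomp: "\<exists>c y. y \<in> Y \<and> z = y + sc c w" for z
  proof -
    have spY: "V.span Y = Y" by (rule V.span_eq_iff[THEN iffD2, OF subY])
    have "z \<in> V.span (insert w Y)" using spanW by simp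
    then have "z \<in> {x. \<exists>k. x - sc k w \<in> V.span Y}" by (simp only: V.span_insert)
    then obtain k where "z - sc k w \<in> V.span Y" by blast
    then have "z - sc k w \<in> Y" unfolding spY .
    then show ?thesis by (intro exI[of _ k] exI[of _ "z - sc k w"]) simp
  qed
  have scw: "c = 0" if "sc c w \<in> Y" for c
  proof (rule ccontr)
    assume "c \<noteq> 0"
    then have "sc (inverse c) (sc c w) = w" by simp
    then have "w \<in> Y" using V.subspace_scale[OF subY that, of "inverse c"] by simp
    then show False using wY by simp
  qed
  have main1: "\<exists>!P. minimal_projection sc Y P" if hyp: "\<not> (\<exists>y\<in>Y. y \<noteq> 0 \<and> (\<forall>i<l. f i y = 0))"
  proof
    show "minimal_projection sc Y P0" by (rule P0min)
  next
    fix P assume Pmin: "minimal_projection sc Y P"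
    define cc where "cc i = (SOME c. \<exists>y. y \<in> Y \<and> x i = y + sc c w)" for i
    define yy where "yy i = x i - sc (cc i) w" for i
    have cy: "yy i \<in> Y" "x i = yy i + sc (cc i) w" for i
    proof -
      have "\<exists>y. y \<in> Y \<and> x i = y + sc (cc i) w"
        unfolding cc_def using decomp[of "x i"] by (rule someI_ex)
      then show "yy i \<in> Y" "x i = yy i + sc (cc i) w" unfolding yy_def by auto
    qed
    note linP = linD[OF proj(1)[OF Pmin]] and linP0 = linD[OF proj(1)[OF P0min]]
    define D where "D z = P z - P0 z" for z
    have Dadd: "D (a + b) = D a + D b" for a b unfolding D_def linP linP0 by simp
    have Dsc: "D (sc c a) = sc c (D a)" for c a unfolding D_def linP linP0 by (simp add: V.scale_right_diff_distrib)
    have DY: "D y = 0" if "y \<in> Y" for y unfolding D_def using proj(3)[OF Pmin that] proj(3)[OF P0min that] by simp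
    have DinY: "D z \<in> Y" for z
      unfolding D_def using proj(2)[OF Pmin] proj(2)[OF P0min] by (intro V.subspace_diff[OF subY]) auto
    define y0 where "y0 = D w"
    have y0Y: "y0 \<in> Y" unfolding y0_def by (rule DinY)
    have Dx: "D (x i) = sc (cc i) y0" for i
    proof -
      have "D (x i) = D (yy i) + sc (cc i) (D w)" by (subst cy(2)[of i]) (simp only: Dadd Dsc)
      then show ?thesis using DY[OF cy(1)[of i]] y0_def by simp
    qed
    have cnz: "cc i \<noteq> 0" if "i < l" for i
    proof
      assume "cc i = 0"
      then have "x i = yy i" using cy[of i] by simp
      then show False using cy(1)[of i] xnotY[OF that] by simp
    qed
    define \<beta> where "\<beta> i = of_real (\<alpha> i) * f i y0" for i
    define s where "s = (\<Sum>i<l. \<beta> i * cc i)"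
    have Ty0: "CM_op sc l \<alpha> x f y0 = (\<Sum>i<l. sc (\<beta> i) (yy i)) + sc s w"
    proof -
      have "CM_op sc l \<alpha> x f y0 = (\<Sum>i<l. sc (\<beta> i) (yy i) + sc (\<beta> i * cc i) w)"
        unfolding CM_op_def \<beta>_def
        by (intro sum.cong refl) (subst cy(2), simp add: V.scale_right_distrib)
      also have "\<dots> = (\<Sum>i<l. sc (\<beta> i) (yy i)) + sc s w"
        unfolding s_def by (simp add: sum.distrib V.scale_sum_left)
      finally show ?thesis .
    qed
    have "CM_op sc l \<alpha> x f y0 \<in> Y" using TY y0Y by blast
    moreover have "(\<Sum>i<l. sc (\<beta> i) (yy i)) \<in> Y"
      by (intro V.subspace_sum[OF subY] V.subspace_scale[OF subY] cy(1))
    ultimately have "(\<Sum>i<l. sc (\<beta> i) (yy i)) + sc s w - (\<Sum>i<l. sc (\<beta> i) (yy i)) \<in> Y"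
      unfolding Ty0 by (rule V.subspace_diff[OF subY])
    then have "sc s w \<in> Y" by simp
    then have s0: "s = 0" by (rule scw)
    have fPx: "f i (P (x i)) = of_real lam + cc i * f i y0" if "i < l" for i
    proof -
      have "P (x i) = P0 (x i) + D (x i)" unfolding D_def by simp
      then have "f i (P (x i)) = f i (P0 (x i)) + f i (sc (cc i) y0)"
        using linD(1)[OF flin[OF that]] Dx by simp
      then show ?thesis using linD(2)[OF flin[OF that]] P0x[OF that] by simp
    qed
    have "(\<Sum>i<l. of_real (\<alpha> i) * f i (P (x i))) = (\<Sum>i<l. of_real (\<alpha> i) * of_real lam + \<beta> i * cc i)"
      by (intro sum.cong refl) (simp add: fPx \<beta>_def algebra_simps)
    also have "\<dots> = of_real lam"
      using s0 asum unfolding s_def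
      by (simp add: sum.distrib flip: sum_distrib_right of_real_sum)
    finally have sm: "(\<Sum>i<l. of_real (\<alpha> i) * f i (P (x i))) = (of_real lam :: 'k)" .
    have bnd: "\<forall>i<l. norm (f i (P (x i))) \<le> lam"
    proof (intro allI impI)
      fix i assume il: "i < l"
      have "norm (f i (P (x i))) \<le> norm (P (x i))" by (rule fsmall[OF il])
      also have "\<dots> \<le> lam * norm (x i)" by (rule Psmall[OF Pmin])
      also have "\<dots> \<le> lam * 1" using xn[OF il] lam1 by (intro mult_left_mono) auto
      finally show "norm (f i (P (x i))) \<le> lam" by simp
    qed
    have allf: "\<forall>i<l. f i (P (x i)) = of_real lam"
      by (rule K_extreme[OF K apos asum bnd sm])
    have "f i y0 = 0" if "i < l" for i
      using allf fPx[OF that] cnz[OF that] that by simp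
    then have "y0 = 0" using hyp y0Y by blast
    show "P = P0"
    proof
      fix z
      obtain c y where "y \<in> Y" "z = y + sc c w" using decomp by blast
      then have "D z = D y + sc c y0" by (simp add: Dadd Dsc y0_def)
      then have "D z = 0" using DY[OF \<open>y \<in> Y\<close>] \<open>y0 = 0\<close> by simp
      then show "P z = P0 z" unfolding D_def by simp
    qed
  qed
  show ?thesis
  proof (intro conjI impI)
    show "\<exists>!P. minimal_projection sc Y P" if "\<not> (\<exists>y\<in>Y. y \<noteq> 0 \<and> (\<forall>i<l. f i y = 0))"
      using main1 that by blast
  next
    assume bij: "bij_betw (CM_op sc l \<alpha> x f) Y Y"
    have "\<not> (\<exists>y\<in>Y. y \<noteq> 0 \<and> (\<forall>i<l. f i y = 0))"
    proof
      assume "\<exists>y\<in>Y. y \<noteq> 0 \<and> (\<forall>i<l. f i y = 0)"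
      then obtain y where y: "y \<in> Y" "y \<noteq> 0" "\<forall>i<l. f i y = 0" by blast
      have "CM_op sc l \<alpha> x f y = 0" using y(3) unfolding CM_op_def by simp
      moreover have "CM_op sc l \<alpha> x f 0 = 0"
      proof -
        have "f i 0 = 0" if "i < l" for i using linD(1)[OF flin[OF that], of 0 0] by simp
        then show ?thesis unfolding CM_op_def by simp
      qed
      moreover have "0 \<in> Y" by (rule V.subspace_0[OF subY])
      ultimately have "y = 0" using bij_betw_imp_inj_on[OF bij] y(1) by (metis inj_onD)
      then show False using y(2) by simp
    qed
    then show "\<exists>!P. minimal_projection sc Y P" by (rule main1)
  qed
qed


end
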